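(* Let $G$ be a unit square graph with $V(G)\neq\emptyset$. Then there is a vertex $v\in V(G)$ such that $G[N[v]]$ is a unit interval graph.
   Context: A unit square graph is a graph $G$ admitting $f\colon V(G)\to\mathbb{R}^2$ with $vw\in E(G)$ iff $\|f(v)-f(w)\|_\infty\le1$ for distinct $v,w$. $N[v]=N(v)\cup\{v\}$ is the closed neighborhood. A unit interval graph is an intersection graph of unit-length intervals on the real line. *)

theory Defs
  imports "HOL-Analysis.Analysis"
begin

definition simple_graph :: "'a set \<Rightarrow> ('a \<Rightarrow> 'a \<Rightarrow> bool) \<Rightarrow> bool" where
  "simple_graph V E \<longleftrightarrow> finite V \<and> (\<forall>v w. E v w \<longrightarrow> v \<in> V \<and> w \<in> V \<and> v \<noteq> w \<and> E w v)"

definition unit_square_graph :: "'a set \<Rightarrow> ('a \<Rightarrow> 'a \<Rightarrow> bool) \<Rightarrow> bool" where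
  "unit_square_graph V E \<longleftrightarrow>
     (\<exists>f :: 'a \<Rightarrow> real^2. \<forall>v\<in>V. \<forall>w\<in>V. v \<noteq> w \<longrightarrow> (E v w \<longleftrightarrow> infnorm (f v - f w) \<le> 1))"

definition unit_interval_graph :: "'a set \<Rightarrow> ('a \<Rightarrow> 'a \<Rightarrow> bool) \<Rightarrow> bool" where
  "unit_interval_graph V E \<longleftrightarrow>
     (\<exists>l :: 'a \<Rightarrow> real. \<forall>v\<in>V. \<forall>w\<in>V. v \<noteq> w \<longrightarrow>
        (E v w \<longleftrightarrow> {l v..l v + 1} \<inter> {l w..l w + 1} \<noteq> {}))"

definition closed_nbhd :: "'a set \<Rightarrow> ('a \<Rightarrow> 'a \<Rightarrow> bool) \<Rightarrow> 'a \<Rightarrow> 'a set" where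
  "closed_nbhd V E v = {w \<in> V. E v w} \<union> {v}"

definition induced_edges :: "('a \<Rightarrow> 'a \<Rightarrow> bool) \<Rightarrow> 'a set \<Rightarrow> 'a \<Rightarrow> 'a \<Rightarrow> bool" where
  "induced_edges E S v w \<longleftrightarrow> v \<in> S \<and> w \<in> S \<and> E v w"

end

theory Submission
  imports Defs
begin

lemma infnorm2_le1: "infnorm (z::real^2) \<le> 1 \<longleftrightarrow> \<bar>z$1\<bar> \<le> 1 \<and> \<bar>z$2\<bar> \<le> 1"
proof -
  have "infnorm z \<le> 1 \<longleftrightarrow> (\<forall>i\<in>Basis. \<bar>z \<bullet> i\<bar> \<le> 1)"
    unfolding infnorm_Max by (simp add: Max_le_iff)
  also have "\<dots> \<longleftrightarrow> (\<forall>k::2. \<bar>z $ k\<bar> \<le> 1)"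
    by (auto simp: Basis_vec_def inner_axis)
  also have "\<dots> \<longleftrightarrow> \<bar>z$1\<bar> \<le> 1 \<and> \<bar>z$2\<bar> \<le> 1"
    by (metis exhaust_2)
  finally show ?thesis .
qed

lemma ivl_int: "{a..a+1} \<inter> {b..b+1::real} \<noteq> {} \<longleftrightarrow> \<bar>a - b\<bar> \<le> 1"
proof
  assume "{a..a+1} \<inter> {b..b+1::real} \<noteq> {}"
  then obtain t where "t \<in> {a..a+1}" "t \<in> {b..b+1}" by blast
  then show "\<bar>a - b\<bar> \<le> 1" by auto
next
  assume "\<bar>a - b\<bar> \<le> 1"
  then have "max a b \<in> {a..a+1} \<inter> {b..b+1}" by auto
  then show "{a..a+1} \<inter> {b..b+1::real} \<noteq> {}" by blast
qed

theorem mainTheorem5: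
  fixes V :: "'a set" and E :: "'a \<Rightarrow> 'a \<Rightarrow> bool"
  assumes "simple_graph V E"
    and "unit_square_graph V E"
    and "V \<noteq> {}"
  shows "\<exists>v\<in>V. unit_interval_graph (closed_nbhd V E v) (induced_edges E (closed_nbhd V E v))"
proof -
  have fin: "finite V" and sym: "\<And>v w. E v w \<Longrightarrow> v \<in> V \<and> w \<in> V \<and> v \<noteq> w"
    using assms(1) unfolding simple_graph_def by auto
  obtain f :: "'a \<Rightarrow> real^2" where f: "\<And>v w. v\<in>V \<Longrightarrow> w\<in>V \<Longrightarrow> v \<noteq> w \<Longrightarrow> E v w \<longleftrightarrow> infnorm (f v - f w) \<le> 1"
    using assms(2) unfolding unit_square_graph_def by blast
  obtain v where vV: "v \<in> V" and vmin: "\<And>u. u \<in> V \<Longrightarrow> f v $ 1 \<le> f u $ 1"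
  proof -
    have "finite ((\<lambda>u. f u $ 1) ` V)" "(\<lambda>u. f u $ 1) ` V \<noteq> {}" using fin assms(3) by auto
    then have "Min ((\<lambda>u. f u $ 1) ` V) \<in> (\<lambda>u. f u $ 1) ` V" by (rule Min_in)
    then obtain v where "v \<in> V" "f v $ 1 = Min ((\<lambda>u. f u $ 1) ` V)" by auto
    then show ?thesis using that fin by auto
  qed
  let ?S = "closed_nbhd V E v"
  have S: "u \<in> ?S \<Longrightarrow> u \<in> V \<and> f v $ 1 \<le> f u $ 1 \<and> f u $ 1 \<le> f v $ 1 + 1" for u
  proof -
    assume "u \<in> ?S"
    then consider "u = v" | "u \<in> V" "E v u" unfolding closed_nbhd_def by auto
    then show ?thesis
    proof cases
      case 1 then show ?thesis using vV by simp
    next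
      case 2
      then have "infnorm (f v - f u) \<le> 1" using f[of v u] vV sym by auto
      then show ?thesis using 2 vmin[of u] by (auto simp: infnorm2_le1)
    qed
  qed
  have "unit_interval_graph ?S (induced_edges E ?S)"
    unfolding unit_interval_graph_def
  proof (intro exI[of _ "\<lambda>u. f u $ 2"] ballI impI)
    fix u w assume u: "u \<in> ?S" and w: "w \<in> ?S" and uw: "u \<noteq> w"
    have "induced_edges E ?S u w \<longleftrightarrow> infnorm (f u - f w) \<le> 1"
      using u w uw S[OF u] S[OF w] f[of u w] by (simp add: induced_edges_def)
    also have "\<dots> \<longleftrightarrow> \<bar>f u $ 2 - f w $ 2\<bar> \<le> 1"
      using S[OF u] S[OF w] by (auto simp: infnorm2_le1)
    finally show "induced_edges E ?S u w \<longleftrightarrow> {f u $ 2..f u $ 2 + 1} \<inter> {f w $ 2..f w $ 2 + 1} \<noteq> {}"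
      by (simp only: ivl_int)
  qed
  then show ?thesis using vV by blast
qed

end
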